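(* Let $\mathbf b=(b_1,\dots,b_{k-1})$ be a sequence of non-negative integers with $|\mathbf b|=\binom k2$. The following are equivalent: (i) $\mathbf b$ is a perfect matching sequence; (ii) the coefficient of $v^{\mathbf b}=v_1^{b_1}\cdots v_{k-1}^{b_{k-1}}$ in the polynomial $V(\lambda)=\prod_{1\le i<j\le k}(\lambda_j-\lambda_i)$, where $\lambda_i:=v_i+v_{i+1}+\dots+v_{k-1}$ for $1\le i\le k$ (so $\lambda_k=0$), is non-zero; (iii) $\sum_{j=s}^t b_j\ge\binom{t-s+2}{2}$ for every $1\le s\le t\le k-1$.
   Context: Fix an integer $k\ge 2$. For a sequence $\mathbf b=(b_1,\dots,b_{k-1})$ of non-negative integers write $|\mathbf b|=\sum_i b_i$. The bipartite graph $\mathcal B_{\mathbf b}$ has upper vertex class $U=\{(j,l):1\le j\le l\le k-1\}$ and lower vertex class $D_{\mathbf b}=\{(i,t):1\le i\le k-1,\ 1\le t\le b_i\}$, with an edge between $(j,l)\in U$ and $(i,t)\in D_{\mathbf b}$ if and only if $j\le i\le l$. The sequence $\mathbf b$ is a matching sequence if $\mathcal B_{\mathbf b}$ has a matching covering all of $D_{\mathbf b}$, and a perfect matching sequence if moreover $|\mathbf b|=\binom k2$. The $v_i$ are independent variables. *)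

theory Defs
  imports Main "HOL-Library.Poly_Mapping"
begin

text \<open>Sequences b = (b_1,...,b_{k-1}) are represented as functions nat => nat;
  only the values b 1, ..., b (k-1) are ever used.\<close>

definition bsize :: "nat \<Rightarrow> (nat \<Rightarrow> nat) \<Rightarrow> nat" where
  "bsize k b = (\<Sum>i=1..k-1. b i)"

definition upperV :: "nat \<Rightarrow> (nat \<times> nat) set" where
  "upperV k = {(j,l). 1 \<le> j \<and> j \<le> l \<and> l \<le> k-1}"

definition lowerV :: "nat \<Rightarrow> (nat \<Rightarrow> nat) \<Rightarrow> (nat \<times> nat) set" where
  "lowerV k b = {(i,t). 1 \<le> i \<and> i \<le> k-1 \<and> 1 \<le> t \<and> t \<le> b i}"

definition edgesB :: "nat \<Rightarrow> (nat \<Rightarrow> nat) \<Rightarrow> ((nat \<times> nat) \<times> (nat \<times> nat)) set" where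
  "edgesB k b = {((j,l),(i,t)). (j,l) \<in> upperV k \<and> (i,t) \<in> lowerV k b \<and> j \<le> i \<and> i \<le> l}"

definition is_matchingB :: "nat \<Rightarrow> (nat \<Rightarrow> nat) \<Rightarrow> ((nat \<times> nat) \<times> (nat \<times> nat)) set \<Rightarrow> bool" where
  "is_matchingB k b M \<longleftrightarrow> M \<subseteq> edgesB k b \<and>
     (\<forall>e\<in>M. \<forall>e'\<in>M. e \<noteq> e' \<longrightarrow> fst e \<noteq> fst e' \<and> snd e \<noteq> snd e')"

definition matching_sequence :: "nat \<Rightarrow> (nat \<Rightarrow> nat) \<Rightarrow> bool" where
  "matching_sequence k b \<longleftrightarrow>
     (\<exists>M. is_matchingB k b M \<and> (\<forall>d\<in>lowerV k b. \<exists>u. (u,d) \<in> M))"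

definition perfect_matching_sequence :: "nat \<Rightarrow> (nat \<Rightarrow> nat) \<Rightarrow> bool" where
  "perfect_matching_sequence k b \<longleftrightarrow> matching_sequence k b \<and> bsize k b = k choose 2"

type_synonym mpoly_int = "(nat \<Rightarrow>\<^sub>0 nat) \<Rightarrow>\<^sub>0 int"

definition var :: "nat \<Rightarrow> mpoly_int" where
  "var i = Poly_Mapping.single (Poly_Mapping.single i 1) 1"

definition lam :: "nat \<Rightarrow> nat \<Rightarrow> mpoly_int" where
  "lam k i = (\<Sum>m=i..k-1. var m)"

definition Vpoly :: "nat \<Rightarrow> mpoly_int" where
  "Vpoly k = (\<Prod>(i,j)\<in>{(i,j). 1 \<le> i \<and> i < j \<and> j \<le> k}. lam k j - lam k i)"

definition bmono :: "nat \<Rightarrow> (nat \<Rightarrow> nat) \<Rightarrow> (nat \<Rightarrow>\<^sub>0 nat)" where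
  "bmono k b = (\<Sum>i=1..k-1. Poly_Mapping.single i (b i))"

end

theory Submission
  imports Defs "HOL-Library.FuncSet"
begin


lemma hall:
  fixes I :: "'i set" and A :: "'i \<Rightarrow> 'x set"
  assumes "finite I" "\<forall>i\<in>I. finite (A i)"
    "\<forall>J\<subseteq>I. card J \<le> card (\<Union> (A ` J))"
  shows "\<exists>f. inj_on f I \<and> (\<forall>i\<in>I. f i \<in> A i)"
  using assms
proof (induction "card I" arbitrary: I A rule: less_induct)
  case less
  show ?case
  proof (cases "I = {}")
    case True then show ?thesis by auto
  next
    case False
    show ?thesis
    proof (cases "\<exists>J. J \<subseteq> I \<and> J \<noteq> {} \<and> J \<noteq> I \<and> card (\<Union>(A ` J)) = card J")
      case True
      then obtain J where J: "J \<subseteq> I" "J \<noteq> {}" "J \<noteq> I" "card (\<Union>(A ` J)) = card J" by blast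
      define X where "X = \<Union>(A ` J)"
      have fJ: "finite J" using J(1) less.prems(1) finite_subset by blast
      have fX: "finite X" unfolding X_def using fJ J(1) less.prems(2) by blast
      have "card J < card I" using J less.prems(1) by (meson psubsetI psubset_card_mono)
      moreover have "\<forall>K\<subseteq>J. card K \<le> card (\<Union> (A ` K))" using less.prems(3) J(1) by blast
      ultimately obtain f1 where f1: "inj_on f1 J" "\<forall>i\<in>J. f1 i \<in> A i"
        using less.hyps[of J A] less.prems(2) J(1) fJ by blast
      define A2 where "A2 i = A i - X" for i
      have "card (I - J) < card I"
      proof -
        have "card J > 0" using fJ J(2) by (simp add: card_gt_0_iff)
        moreover have "card J \<le> card I" using J(1) less.prems(1) by (rule card_mono[rotated])
        ultimately show ?thesis using card_Diff_subset[OF fJ J(1)] by simp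
      qed
      moreover have "\<forall>K\<subseteq>I-J. card K \<le> card (\<Union>(A2 ` K))"
      proof (intro allI impI)
        fix K assume K: "K \<subseteq> I - J"
        have fK: "finite K" using K less.prems(1) finite_subset by blast
        have fU: "finite (\<Union>(A2 ` K))" using fK K less.prems(2) by (auto simp: A2_def)
        have "card K + card J = card (K \<union> J)" using K fK fJ by (subst card_Un_disjoint) auto
        also have "\<dots> \<le> card (\<Union>(A ` (K \<union> J)))" using less.prems(3) K J(1) by (meson Diff_subset subset_trans Un_least)
        also have "\<dots> \<le> card (\<Union>(A2 ` K) \<union> X)"
          by (rule card_mono) (use fU fX in \<open>auto simp: A2_def X_def\<close>)
        also have "\<dots> \<le> card (\<Union>(A2 ` K)) + card X" by (rule card_Un_le)
        finally show "card K \<le> card (\<Union>(A2 ` K))" using J(4) X_def by simp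
      qed
      moreover have "\<forall>i\<in>I-J. finite (A2 i)" using less.prems(2) by (auto simp: A2_def)
      ultimately obtain f2 where f2: "inj_on f2 (I-J)" "\<forall>i\<in>I-J. f2 i \<in> A2 i"
        using less.hyps[of "I-J" A2] less.prems(1) by blast
      define f where "f i = (if i \<in> J then f1 i else f2 i)" for i
      have "inj_on f I"
      proof (rule inj_onI)
        fix x y assume xy: "x \<in> I" "y \<in> I" "f x = f y"
        show "x = y"
        proof (cases "x \<in> J"; cases "y \<in> J")
          assume "x \<in> J" "y \<in> J" then show ?thesis using xy f1 by (auto simp: f_def inj_on_def)
        next
          assume "x \<notin> J" "y \<notin> J" then show ?thesis using xy f2 by (auto simp: f_def inj_on_def)
        next
          assume "x \<in> J" "y \<notin> J" then show ?thesis using xy f1 f2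
            by (auto simp: f_def A2_def X_def)
        next
          assume xJ: "x \<notin> J" and yJ: "y \<in> J"
          have "f2 x \<notin> X" using f2 xJ xy(1) by (auto simp: A2_def)
          moreover have "f1 y \<in> X" using f1 yJ by (auto simp: X_def)
          moreover have "f2 x = f1 y" using xy(3) xJ yJ by (simp add: f_def)
          ultimately show ?thesis by simp
        qed
      qed
      moreover have "\<forall>i\<in>I. f i \<in> A i" using f1 f2 by (auto simp: f_def A2_def)
      ultimately show ?thesis by blast
    next
      case False
      have strict: "card K < card (\<Union>(A ` K))" if "K \<subseteq> I" "K \<noteq> {}" "K \<noteq> I" for K
      proof -
        have "card K \<le> card (\<Union>(A ` K))" using less.prems(3) that(1) by blast
        moreover have "card (\<Union>(A ` K)) \<noteq> card K" using False that by blast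
        ultimately show ?thesis by linarith
      qed
      obtain i0 where i0: "i0 \<in> I" using \<open>I \<noteq> {}\<close> by blast
      have "card {i0} \<le> card (\<Union>(A ` {i0}))" using less.prems(3) i0 by blast
      then have "card {i0} \<le> card (A i0)" by simp
      then have "A i0 \<noteq> {}" by auto
      then obtain x where x: "x \<in> A i0" by blast
      define A2 where "A2 i = A i - {x}" for i
      have "card (I - {i0}) < card I" using i0 less.prems(1) by (metis card_Diff1_less)
      moreover have "\<forall>K\<subseteq>I-{i0}. card K \<le> card (\<Union>(A2 ` K))"
      proof (intro allI impI)
        fix K assume K: "K \<subseteq> I - {i0}"
        show "card K \<le> card (\<Union>(A2 ` K))"
        proof (cases "K = {}")
          case True then show ?thesis by simp
        next
          case False
          have fK: "finite K" using K less.prems(1) finite_subset by blast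
          have fU: "finite (\<Union>(A2 ` K))" using fK K less.prems(2) by (auto simp: A2_def)
          have "card K < card (\<Union>(A ` K))" using strict[of K] K False i0 by blast
          also have "\<dots> \<le> card (insert x (\<Union>(A2 ` K)))"
            by (rule card_mono) (use fU in \<open>auto simp: A2_def\<close>)
          also have "\<dots> \<le> Suc (card (\<Union>(A2 ` K)))" by (simp add: card_insert_le_m1 card_insert_if)
          finally show ?thesis by simp
        qed
      qed
      moreover have "\<forall>i\<in>I-{i0}. finite (A2 i)" using less.prems(2) by (auto simp: A2_def)
      ultimately obtain f2 where f2: "inj_on f2 (I-{i0})" "\<forall>i\<in>I-{i0}. f2 i \<in> A2 i"
        using less.hyps[of "I-{i0}" A2] less.prems(1) by blast
      define f where "f = f2(i0 := x)"
      have "inj_on f I" using f2 unfolding f_def inj_on_def A2_def by auto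
      moreover have "\<forall>i\<in>I. f i \<in> A i" using f2 x by (auto simp: f_def A2_def)
      ultimately show ?thesis by blast
    qed
  qed
qed




lemma card_tri: "card {(j,l::nat). s \<le> j \<and> j \<le> l \<and> l \<le> t} = (t + 2 - s) choose 2"
proof (induction t)
  case 0
  then show ?case
  proof (cases "s = 0")
    case True
    have "{(j,l::nat). s \<le> j \<and> j \<le> l \<and> l \<le> 0} = {(0,0)}" using True by auto
    moreover have "((0::nat) + 2 - s) choose 2 = 1" using True by (simp add: numeral_2_eq_2)
    ultimately show ?thesis by simp
  next
    case False
    have "{(j,l::nat). s \<le> j \<and> j \<le> l \<and> l \<le> 0} = {}" using False by auto
    moreover have "((0::nat)+2-s) choose 2 = 0" using False by (simp add: binomial_eq_0)
    ultimately show ?thesis by (metis card.empty)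
  qed
next
  case (Suc t)
  have eq: "{(j,l::nat). s \<le> j \<and> j \<le> l \<and> l \<le> Suc t} =
     {(j,l::nat). s \<le> j \<and> j \<le> l \<and> l \<le> t} \<union> (\<lambda>j. (j, Suc t)) ` {s..Suc t}" by auto
  have fin: "finite {(j,l::nat). s \<le> j \<and> j \<le> l \<and> l \<le> t}"
    by (rule finite_subset[of _ "{0..t} \<times> {0..t}"]) auto
  have c1: "card {(j,l::nat). s \<le> j \<and> j \<le> l \<and> l \<le> Suc t} =
     card {(j,l::nat). s \<le> j \<and> j \<le> l \<and> l \<le> t} + card ((\<lambda>j. (j, Suc t)) ` {s..Suc t})"
    unfolding eq by (rule card_Un_disjoint) (use fin in auto)
  have c2: "card ((\<lambda>j. (j, Suc t)) ` {s..Suc t}) = Suc t + 1 - s"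
    by (subst card_image) (auto simp: inj_on_def)
  have "card {(j,l::nat). s \<le> j \<and> j \<le> l \<and> l \<le> Suc t} = ((t + 2 - s) choose 2) + (Suc t + 1 - s)"
    using Suc c1 c2 by simp
  also have "\<dots> = (Suc t + 2 - s) choose 2"
  proof (cases "s \<le> Suc t")
    case True
    then have "Suc t + 2 - s = Suc (t + 2 - s)" by simp
    then show ?thesis using True by (simp add: numeral_2_eq_2)
  next
    case False
    then show ?thesis by (simp add: binomial_eq_0)
  qed
  finally show ?case .
qed

lemma runs:
  assumes H: "\<forall>s t. 1 \<le> s \<and> s \<le> t \<and> t \<le> n \<longrightarrow> (t-s+2) choose 2 \<le> (\<Sum>j=s..t. b j)"
  shows "P \<subseteq> {1..n} \<Longrightarrow> card {(j,l). 1 \<le> j \<and> j \<le> l \<and> l \<le> n \<and> {j..l} \<subseteq> P} \<le> (\<Sum>i\<in>P. b i)"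
proof (induction "card P" arbitrary: P rule: less_induct)
  case less
  show ?case
  proof (cases "P = {}")
    case True
    then have "{(j,l). 1 \<le> j \<and> j \<le> l \<and> l \<le> n \<and> {j..l} \<subseteq> P} = {}" by (simp add: True)
    then show ?thesis by (metis card.empty zero_le)
  next
    case False
    have fP: "finite P" using less.prems finite_subset by blast
    define t where "t = Max P"
    have tP: "t \<in> P" unfolding t_def using fP False by simp
    have tmax: "\<And>x. x \<in> P \<Longrightarrow> x \<le> t" unfolding t_def using fP by simp
    define s where "s = (LEAST s. {s..t} \<subseteq> P)"
    have sP: "{s..t} \<subseteq> P" unfolding s_def by (rule LeastI[of _ t]) (use tP in auto)
    have sle: "s \<le> t" unfolding s_def by (rule Least_le) (use tP in auto)
    have sinP: "s \<in> P" using sP sle by auto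
    have s1: "1 \<le> s" using sinP less.prems by auto
    have tn: "t \<le> n" using tP less.prems by auto
    have gap: "s - 1 \<notin> P" if "2 \<le> s"
    proof
      assume s1P: "s - 1 \<in> P"
      have "{s-1..t} \<subseteq> P"
      proof
        fix x assume "x \<in> {s-1..t}"
        then show "x \<in> P" using sP s1P by (cases "x = s - 1") auto
      qed
      then have "s \<le> s - 1" unfolding s_def[symmetric] by (metis (mono_tags, lifting) Least_le s_def)
      then show False using that by simp
    qed
    define P' where "P' = P - {s..t}"
    have "card P' < card P" unfolding P'_def using fP sP sle
      by (metis Diff_subset atLeastAtMost_iff card_seteq fP finite_Diff linorder_not_le
          psubsetI psubset_card_mono subset_Diff_insert order_refl subsetD tP insert_absorb)
    moreover have "P' \<subseteq> {1..n}" using less.prems by (auto simp: P'_def)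
    ultimately have IH: "card {(j,l). 1 \<le> j \<and> j \<le> l \<and> l \<le> n \<and> {j..l} \<subseteq> P'} \<le> (\<Sum>i\<in>P'. b i)"
      using less.hyps by blast
    have sub: "{(j,l). 1 \<le> j \<and> j \<le> l \<and> l \<le> n \<and> {j..l} \<subseteq> P} \<subseteq>
       {(j,l). 1 \<le> j \<and> j \<le> l \<and> l \<le> n \<and> {j..l} \<subseteq> P'} \<union> {(j,l). s \<le> j \<and> j \<le> l \<and> l \<le> t}"
    proof
      fix x assume "x \<in> {(j,l). 1 \<le> j \<and> j \<le> l \<and> l \<le> n \<and> {j..l} \<subseteq> P}"
      then obtain j l where x: "x = (j,l)" and jl: "1 \<le> j" "j \<le> l" "l \<le> n" "{j..l} \<subseteq> P" by blast
      show "x \<in> {(j,l). 1 \<le> j \<and> j \<le> l \<and> l \<le> n \<and> {j..l} \<subseteq> P'} \<union> {(j,l). s \<le> j \<and> j \<le> l \<and> l \<le> t}"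
      proof (cases "s \<le> j \<and> j \<le> l \<and> l \<le> t")
        case True then show ?thesis using x by auto
      next
        case nt: False
      have "{j..l} \<subseteq> P'"
      proof (cases "l < s")
        case True then show ?thesis using jl by (auto simp: P'_def)
      next
        case False
        have "l \<le> t" using tmax jl by auto
        then have "j < s" using nt jl by auto
        then have "2 \<le> s" "s - 1 \<in> {j..l}" using jl False by auto
        then show ?thesis using gap jl by auto
      qed
      then show ?thesis using x jl by auto
      qed
    qed
    have f1: "finite {(j,l). 1 \<le> j \<and> j \<le> l \<and> l \<le> n \<and> {j..l} \<subseteq> P'}"
      by (rule finite_subset[of _ "{0..n} \<times> {0..n}"]) auto
    have f2: "finite {(j,l::nat). s \<le> j \<and> j \<le> l \<and> l \<le> t}"
      by (rule finite_subset[of _ "{0..t} \<times> {0..t}"]) auto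
    have "card {(j,l). 1 \<le> j \<and> j \<le> l \<and> l \<le> n \<and> {j..l} \<subseteq> P} \<le>
        card ({(j,l). 1 \<le> j \<and> j \<le> l \<and> l \<le> n \<and> {j..l} \<subseteq> P'} \<union> {(j,l). s \<le> j \<and> j \<le> l \<and> l \<le> t})"
      by (rule card_mono) (use f1 f2 sub in auto)
    also have "\<dots> \<le> card {(j,l). 1 \<le> j \<and> j \<le> l \<and> l \<le> n \<and> {j..l} \<subseteq> P'} + card {(j,l::nat). s \<le> j \<and> j \<le> l \<and> l \<le> t}"
      by (rule card_Un_le)
    also have "\<dots> \<le> (\<Sum>i\<in>P'. b i) + (\<Sum>i=s..t. b i)"
    proof -
      have "card {(j,l::nat). s \<le> j \<and> j \<le> l \<and> l \<le> t} = (t - s + 2) choose 2"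
        using card_tri[of s t] sle by (metis Nat.add_diff_assoc2)
      also have "\<dots> \<le> (\<Sum>i=s..t. b i)" using H s1 sle tn by blast
      finally show ?thesis using IH by simp
    qed
    also have "\<dots> = (\<Sum>i\<in>P. b i)"
    proof -
      show ?thesis using sum.subset_diff[OF sP fP, of b] unfolding P'_def by (metis (no_types))
    qed
    finally show ?thesis .
  qed
qed




lemma finU: "finite (upperV k)"
  unfolding upperV_def by (rule finite_subset[of _ "{0..k} \<times> {0..k}"]) auto

lemma D_eq: "lowerV k b = Sigma {1..k-1} (\<lambda>i. {1..b i})"
  unfolding lowerV_def by auto

lemma finD: "finite (lowerV k b)" by (simp add: D_eq)

lemma cardD: "card (lowerV k b) = bsize k b" by (simp add: D_eq bsize_def card_SigmaI)

lemma cardU: "k \<ge> 1 \<Longrightarrow> card (upperV k) = k choose 2"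
proof -
  assume k: "k \<ge> 1"
  have "upperV k = {(j,l). 1 \<le> j \<and> j \<le> l \<and> l \<le> k-1}" unfolding upperV_def by auto
  then show ?thesis using card_tri[of 1 "k-1"] k by simp
qed

definition asg :: "nat \<Rightarrow> (nat \<Rightarrow> nat) \<Rightarrow> (nat \<times> nat \<Rightarrow> nat) \<Rightarrow> bool" where
  "asg k b f \<longleftrightarrow> (\<forall>u\<in>upperV k. fst u \<le> f u \<and> f u \<le> snd u) \<and>
     (\<forall>x\<in>{1..k-1}. card {u\<in>upperV k. f u = x} = b x)"



lemma H_match:
  assumes k: "k \<ge> 1" and bs: "bsize k b = k choose 2"
   and H: "\<forall>s t. 1 \<le> s \<and> s \<le> t \<and> t \<le> k-1 \<longrightarrow> (t-s+2) choose 2 \<le> (\<Sum>j=s..t. b j)"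
  shows "matching_sequence k b"
proof -
  define A where "A u = {d \<in> lowerV k b. fst u \<le> fst d \<and> fst d \<le> snd u}" for u :: "nat\<times>nat"
  have hc: "\<forall>J\<subseteq>upperV k. card J \<le> card (\<Union>(A ` J))"
  proof (intro allI impI)
    fix J assume J: "J \<subseteq> upperV k"
    define P where "P = {i. \<exists>u\<in>J. fst u \<le> i \<and> i \<le> snd u}"
    have PS: "P \<subseteq> {1..k-1}" using J by (auto simp: P_def upperV_def)
    have fP: "finite P" using PS finite_subset by blast
    have U_eq: "\<Union>(A ` J) = Sigma P (\<lambda>i. {1..b i})"
    proof (rule set_eqI)
      fix d :: "nat \<times> nat"
      obtain i t where d: "d = (i,t)" by (cases d)
      have "d \<in> \<Union>(A ` J) \<longleftrightarrow> i \<in> P \<and> d \<in> lowerV k b" unfolding A_def P_def d by auto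
      also have "\<dots> \<longleftrightarrow> d \<in> Sigma P (\<lambda>i. {1..b i})" using PS unfolding lowerV_def d by auto
      finally show "d \<in> \<Union>(A ` J) \<longleftrightarrow> d \<in> Sigma P (\<lambda>i. {1..b i})" .
    qed
    then have cU: "card (\<Union>(A ` J)) = (\<Sum>i\<in>P. b i)" using fP by (simp add: card_SigmaI)
    have "J \<subseteq> {(j,l). 1 \<le> j \<and> j \<le> l \<and> l \<le> k-1 \<and> {j..l} \<subseteq> P}"
      using J by (force simp: upperV_def P_def)
    moreover have "finite {(j,l). 1 \<le> j \<and> j \<le> l \<and> l \<le> k-1 \<and> {j..l} \<subseteq> P}"
      by (rule finite_subset[of _ "{0..k} \<times> {0..k}"]) auto
    ultimately have "card J \<le> card {(j,l). 1 \<le> j \<and> j \<le> l \<and> l \<le> k-1 \<and> {j..l} \<subseteq> P}"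
      by (rule card_mono[rotated])
    also have "\<dots> \<le> (\<Sum>i\<in>P. b i)" using runs[OF H PS] .
    finally show "card J \<le> card (\<Union>(A ` J))" using cU by simp
  qed
  have "\<forall>u\<in>upperV k. finite (A u)" using finD by (auto simp: A_def)
  then obtain f where f: "inj_on f (upperV k)" "\<forall>u\<in>upperV k. f u \<in> A u"
    using hall[OF finU _ hc] by blast
  have sub: "f ` upperV k \<subseteq> lowerV k b" using f(2) by (auto simp: A_def)
  have "card (f ` upperV k) = card (lowerV k b)"
    using card_image[OF f(1)] cardU[OF k] cardD bs by simp
  then have fU: "f ` upperV k = lowerV k b" using card_subset_eq[OF finD sub] by simp
  define M where "M = (\<lambda>u. (u, f u)) ` upperV k"
  have "is_matchingB k b M"
    unfolding is_matchingB_def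
  proof
    show "M \<subseteq> edgesB k b"
    proof
      fix e assume "e \<in> M"
      then obtain u where u: "u \<in> upperV k" "e = (u, f u)" by (auto simp: M_def)
      obtain j l where ju: "u = (j,l)" by (cases u)
      obtain i t where it: "f u = (i,t)" by (cases "f u")
      have "f u \<in> A u" using f(2) u(1) by blast
      then show "e \<in> edgesB k b" using u ju it unfolding edgesB_def A_def by auto
    qed
    show "\<forall>e\<in>M. \<forall>e'\<in>M. e \<noteq> e' \<longrightarrow> fst e \<noteq> fst e' \<and> snd e \<noteq> snd e'"
      using f(1) unfolding M_def inj_on_def by auto
  qed
  moreover have "\<forall>d\<in>lowerV k b. \<exists>u. (u,d) \<in> M"
  proof
    fix d assume "d \<in> lowerV k b"
    then obtain u where "u \<in> upperV k" "d = f u" using fU by blast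
    then show "\<exists>u. (u,d) \<in> M" unfolding M_def by blast
  qed
  ultimately show ?thesis unfolding matching_sequence_def by blast
qed



lemma match_asg:
  assumes k: "k \<ge> 1" and bs: "bsize k b = k choose 2" and m: "matching_sequence k b"
  shows "\<exists>f. asg k b f"
proof -
  obtain M where M: "is_matchingB k b M" "\<forall>d\<in>lowerV k b. \<exists>u. (u,d) \<in> M"
    using m unfolding matching_sequence_def by blast
  define g where "g d = (SOME u. (u,d) \<in> M)" for d
  have gM: "(g d, d) \<in> M" if "d \<in> lowerV k b" for d
    using M(2) that unfolding g_def by (meson someI_ex)
  have Medge: "e \<in> edgesB k b" if "e \<in> M" for e using M(1) that unfolding is_matchingB_def by blast
  have gU: "g ` lowerV k b \<subseteq> upperV k"
    using gM Medge unfolding edgesB_def by fastforce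
  have ginj: "inj_on g (lowerV k b)"
  proof (rule inj_onI)
    fix d d' assume dd: "d \<in> lowerV k b" "d' \<in> lowerV k b" "g d = g d'"
    show "d = d'"
    proof (rule ccontr)
      assume "d \<noteq> d'"
      then have "(g d, d) \<noteq> (g d', d')" by simp
      then show False using M(1) gM[OF dd(1)] gM[OF dd(2)] dd(3) unfolding is_matchingB_def by fastforce
    qed
  qed
  have "card (g ` lowerV k b) = card (upperV k)"
    using card_image[OF ginj] cardU[OF k] cardD bs by simp
  then have gim: "g ` lowerV k b = upperV k" using card_subset_eq[OF finU gU] by simp
  define f where "f u = fst (inv_into (lowerV k b) g u)" for u
  have "asg k b f"
    unfolding asg_def
  proof
    show "\<forall>u\<in>upperV k. fst u \<le> f u \<and> f u \<le> snd u"
    proof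
      fix u assume u: "u \<in> upperV k"
      define d where "d = inv_into (lowerV k b) g u"
      have dD: "d \<in> lowerV k b" unfolding d_def using u gim by (metis inv_into_into)
      have gd: "g d = u" unfolding d_def using u gim by (metis f_inv_into_f)
      have "(u, d) \<in> edgesB k b" using Medge gM[OF dD] gd by simp
      then show "fst u \<le> f u \<and> f u \<le> snd u" unfolding f_def d_def[symmetric] edgesB_def by auto
    qed
    show "\<forall>x\<in>{1..k-1}. card {u\<in>upperV k. f u = x} = b x"
    proof
      fix x assume x: "x \<in> {1..k-1}"
      have "{u\<in>upperV k. f u = x} = g ` {d\<in>lowerV k b. fst d = x}"
      proof
        show "{u\<in>upperV k. f u = x} \<subseteq> g ` {d\<in>lowerV k b. fst d = x}"
        proof
          fix u assume u: "u \<in> {u\<in>upperV k. f u = x}"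
          define d where "d = inv_into (lowerV k b) g u"
          have dD: "d \<in> lowerV k b" unfolding d_def using u gim by (metis (no_types, lifting) inv_into_into mem_Collect_eq)
          have gd: "g d = u" unfolding d_def using u gim by (metis (no_types, lifting) f_inv_into_f mem_Collect_eq)
          have "fst d = x" using u unfolding f_def d_def by simp
          then show "u \<in> g ` {d\<in>lowerV k b. fst d = x}" using dD gd by blast
        qed
        show "g ` {d\<in>lowerV k b. fst d = x} \<subseteq> {u\<in>upperV k. f u = x}"
          using gU ginj unfolding f_def by (auto simp: inv_into_f_f)
      qed
      moreover have "inj_on g {d\<in>lowerV k b. fst d = x}" using ginj by (rule inj_on_subset) auto
      moreover have "{d\<in>lowerV k b. fst d = x} = {x} \<times> {1..b x}" using x unfolding lowerV_def by auto
      ultimately show "card {u\<in>upperV k. f u = x} = b x" by (simp add: card_image)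
    qed
  qed
  then show ?thesis by blast
qed



lemma asg_H:
  assumes a: "asg k b f"
  shows "\<forall>s t. 1 \<le> s \<and> s \<le> t \<and> t \<le> k-1 \<longrightarrow> (t-s+2) choose 2 \<le> (\<Sum>j=s..t. b j)"
proof (intro allI impI)
  fix s t assume st: "1 \<le> s \<and> s \<le> t \<and> t \<le> k-1"
  define S where "S = {(j,l::nat). s \<le> j \<and> j \<le> l \<and> l \<le> t}"
  have cS: "card S = (t-s+2) choose 2" unfolding S_def using card_tri[of s t] st
    by (metis Nat.add_diff_assoc2)
  have "S \<subseteq> (\<Union>x\<in>{s..t}. {u\<in>upperV k. f u = x})"
  proof
    fix u assume u: "u \<in> S"
    then have uU: "u \<in> upperV k" using st unfolding S_def upperV_def by auto
    then have "fst u \<le> f u \<and> f u \<le> snd u" using a unfolding asg_def by blast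
    then have "f u \<in> {s..t}" using u unfolding S_def by auto
    then show "u \<in> (\<Union>x\<in>{s..t}. {u\<in>upperV k. f u = x})" using uU by blast
  qed
  then have "card S \<le> card (\<Union>x\<in>{s..t}. {u\<in>upperV k. f u = x})"
    by (rule card_mono[rotated]) (use finU in auto)
  also have "\<dots> \<le> (\<Sum>x=s..t. card {u\<in>upperV k. f u = x})" by (rule card_UN_le) simp
  also have "\<dots> = (\<Sum>x=s..t. b x)" using a st unfolding asg_def by (intro sum.cong) auto
  finally show "(t-s+2) choose 2 \<le> (\<Sum>j=s..t. b j)" using cS by simp
qed




lemma lam_diff:
  assumes "1 \<le> i" "i < j" "j \<le> k"
  shows "lam k j - lam k i = - (\<Sum>m\<in>{i..j-1}. var m)"
proof -
  have "{i..k-1} = {i..j-1} \<union> {j..k-1}" using assms by auto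
  moreover have "{i..j-1} \<inter> {j..k-1} = {}" using assms by auto
  ultimately have "lam k i = (\<Sum>m\<in>{i..j-1}. var m) + lam k j"
    unfolding lam_def by (simp add: sum.union_disjoint)
  then show ?thesis by (simp add: algebra_simps)
qed

definition sv :: "nat \<times> nat \<Rightarrow> mpoly_int" where
  "sv u = (\<Sum>m\<in>{fst u..snd u}. var m)"

lemma Vpoly_eq:
  "Vpoly k = (-1) ^ card {(i,j). 1 \<le> i \<and> i < j \<and> j \<le> k} * (\<Prod>u\<in>upperV k. sv u)"
proof -
  define Q where "Q = {(i::nat,j). 1 \<le> i \<and> i < j \<and> j \<le> k}"
  define h where "h q = (fst q, snd q - 1)" for q :: "nat \<times> nat"
  have "Vpoly k = (\<Prod>q\<in>Q. - sv (h q))"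
    unfolding Vpoly_def Q_def
  proof (rule prod.cong[OF refl])
    fix q assume "q \<in> {(i, j). 1 \<le> i \<and> i < j \<and> j \<le> k}"
    then obtain i j where q: "q = (i,j)" "1 \<le> i" "i < j" "j \<le> k" by blast
    show "(case q of (i, j) \<Rightarrow> lam k j - lam k i) = - sv (h q)"
      using lam_diff[OF q(2-4)] by (simp add: q(1) h_def sv_def)
  qed
  also have "\<dots> = (-1) ^ card Q * (\<Prod>q\<in>Q. sv (h q))" by (rule prod_uminus)
  also have "(\<Prod>q\<in>Q. sv (h q)) = (\<Prod>u\<in>upperV k. sv u)"
  proof -
    have inj: "inj_on h Q" unfolding inj_on_def Q_def h_def by auto
    have im: "h ` Q = upperV k"
    proof
      show "h ` Q \<subseteq> upperV k" unfolding Q_def h_def upperV_def by auto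
      show "upperV k \<subseteq> h ` Q"
      proof
        fix u assume "u \<in> upperV k"
        then obtain j l where u: "u = (j,l)" "1 \<le> j" "j \<le> l" "l \<le> k - 1" unfolding upperV_def by blast
        then have "(j, l+1) \<in> Q" "h (j, l+1) = u" unfolding Q_def h_def by auto
        then show "u \<in> h ` Q" by (metis imageI)
      qed
    qed
    show ?thesis using prod.reindex[OF inj, of sv] im by (simp add: comp_def)
  qed
  finally show ?thesis unfolding Q_def .
qed

lemma lookup_sign: "(Poly_Mapping.lookup ((-1) ^ n * p) m \<noteq> 0) \<longleftrightarrow> (Poly_Mapping.lookup (p :: mpoly_int) m \<noteq> 0)"
  by (cases "even n") (simp_all)

lemma prod_var: "finite A \<Longrightarrow> (\<Prod>u\<in>A. var (f u)) =
   Poly_Mapping.single (\<Sum>u\<in>A. Poly_Mapping.single (f u) 1) 1"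
proof (induction A rule: finite_induct)
  case empty then show ?case by simp
next
  case (insert x A)
  then show ?case by (simp add: var_def mult_single)
qed

definition monof :: "nat \<Rightarrow> (nat \<times> nat \<Rightarrow> nat) \<Rightarrow> (nat \<Rightarrow>\<^sub>0 nat)" where
  "monof k g = (\<Sum>u\<in>upperV k. Poly_Mapping.single (g u) 1)"

lemma expand: "(\<Prod>u\<in>upperV k. sv u) =
  (\<Sum>g\<in>PiE (upperV k) (\<lambda>u. {fst u..snd u}). Poly_Mapping.single (monof k g) 1)"
  unfolding sv_def monof_def
  by (simp add: prod_sum_PiE[OF finU] prod_var[OF finU])

lemma lookup_count:
  assumes "finite F"
  shows "Poly_Mapping.lookup (\<Sum>g\<in>F. Poly_Mapping.single (\<phi> g) (1::int)) m \<noteq> 0 \<longleftrightarrow> (\<exists>g\<in>F. \<phi> g = m)"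
proof -
  have "Poly_Mapping.lookup (\<Sum>g\<in>F. Poly_Mapping.single (\<phi> g) (1::int)) m = (\<Sum>g\<in>F. if \<phi> g = m then 1 else 0)"
    by (auto simp: lookup_sum lookup_single when_def intro!: sum.cong)
  moreover have "(\<Sum>g\<in>F. if \<phi> g = m then 1 else 0::int) = 0 \<longleftrightarrow> (\<forall>g\<in>F. (if \<phi> g = m then 1 else 0::int) = 0)"
    by (rule sum_nonneg_eq_0_iff[OF assms]) simp
  ultimately show ?thesis by auto
qed

lemma monof_lookup: "Poly_Mapping.lookup (monof k g) x = card {u\<in>upperV k. g u = x}"
proof -
  have "Poly_Mapping.lookup (monof k g) x = (\<Sum>u\<in>upperV k. if g u = x then 1 else 0)"
    by (auto simp: monof_def lookup_sum lookup_single when_def intro!: sum.cong)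
  also have "\<dots> = card {u\<in>upperV k. g u = x}"
    using finU[of k] by (simp add: sum.inter_filter[symmetric])
  finally show ?thesis .
qed

lemma bmono_lookup: "Poly_Mapping.lookup (bmono k b) x = (if x \<in> {1..k-1} then b x else 0)"
  by (simp add: bmono_def lookup_sum lookup_single when_def)

lemma coeff_asg: "Poly_Mapping.lookup (Vpoly k) (bmono k b) \<noteq> 0 \<longleftrightarrow> (\<exists>f. asg k b f)"
proof -
  have fin: "finite (PiE (upperV k) (\<lambda>u. {fst u..snd u}))" using finU by (simp add: finite_PiE)
  have "Poly_Mapping.lookup (Vpoly k) (bmono k b) \<noteq> 0 \<longleftrightarrow>
     (\<exists>g\<in>PiE (upperV k) (\<lambda>u. {fst u..snd u}). monof k g = bmono k b)"
    unfolding Vpoly_eq lookup_sign expand by (rule lookup_count[OF fin])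
  also have "\<dots> \<longleftrightarrow> (\<exists>f. asg k b f)"
  proof
    assume "\<exists>g\<in>PiE (upperV k) (\<lambda>u. {fst u..snd u}). monof k g = bmono k b"
    then obtain g where g: "g \<in> PiE (upperV k) (\<lambda>u. {fst u..snd u})" "monof k g = bmono k b" by blast
    have "asg k b g" unfolding asg_def
    proof
      show "\<forall>u\<in>upperV k. fst u \<le> g u \<and> g u \<le> snd u" using g(1) by (auto simp: PiE_def Pi_def)
      show "\<forall>x\<in>{1..k - 1}. card {u \<in> upperV k. g u = x} = b x"
      proof
        fix x assume x: "x \<in> {1..k-1}"
        have "card {u \<in> upperV k. g u = x} = Poly_Mapping.lookup (monof k g) x" by (simp add: monof_lookup)
        also have "\<dots> = b x" using g(2) x by (simp add: bmono_lookup)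
        finally show "card {u \<in> upperV k. g u = x} = b x" .
      qed
    qed
    then show "\<exists>f. asg k b f" by blast
  next
    assume "\<exists>f. asg k b f"
    then obtain f where f: "asg k b f" by blast
    define g where "g = restrict f (upperV k)"
    have "g \<in> PiE (upperV k) (\<lambda>u. {fst u..snd u})"
      using f unfolding g_def asg_def by auto
    moreover have "monof k g = bmono k b"
    proof (rule poly_mapping_eqI)
      fix x
      have eq: "{u \<in> upperV k. g u = x} = {u \<in> upperV k. f u = x}" unfolding g_def by auto
      show "Poly_Mapping.lookup (monof k g) x = Poly_Mapping.lookup (bmono k b) x"
      proof (cases "x \<in> {1..k-1}")
        case True
        then show ?thesis using f unfolding monof_lookup bmono_lookup eq asg_def by simp
      next
        case False
        have "{u \<in> upperV k. f u = x} = {}"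
        proof -
          { fix u assume u: "u \<in> upperV k" "f u = x"
            then have "fst u \<le> f u \<and> f u \<le> snd u" using f unfolding asg_def by blast
            moreover have "1 \<le> fst u" "snd u \<le> k - 1" using u(1) unfolding upperV_def by auto
            ultimately have "x \<in> {1..k-1}" using u(2) by auto
            then have False using False by simp }
          then show ?thesis by blast
        qed
        then have "card {u \<in> upperV k. f u = x} = 0" by (metis card.empty)
        then show ?thesis using False unfolding monof_lookup bmono_lookup eq by auto
      qed
    qed
    ultimately show "\<exists>g\<in>PiE (upperV k) (\<lambda>u. {fst u..snd u}). monof k g = bmono k b" by blast
  qed
  finally show ?thesis .
qed



theorem mainTheorem7:
  fixes k :: nat and b :: "nat \<Rightarrow> nat"
  assumes "k \<ge> 2"
    and "bsize k b = k choose 2"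
  shows "(perfect_matching_sequence k b \<longleftrightarrow> Poly_Mapping.lookup (Vpoly k) (bmono k b) \<noteq> 0)
       \<and> (Poly_Mapping.lookup (Vpoly k) (bmono k b) \<noteq> 0 \<longleftrightarrow>
            (\<forall>s t. 1 \<le> s \<and> s \<le> t \<and> t \<le> k-1 \<longrightarrow> (\<Sum>j=s..t. b j) \<ge> (t-s+2) choose 2))"
proof -
  have k1: "k \<ge> 1" using assms(1) by simp
  have pm: "perfect_matching_sequence k b \<longleftrightarrow> matching_sequence k b"
    using assms(2) unfolding perfect_matching_sequence_def by simp
  have c: "Poly_Mapping.lookup (Vpoly k) (bmono k b) \<noteq> 0 \<longleftrightarrow> (\<exists>f. asg k b f)" by (rule coeff_asg)
  have 1: "matching_sequence k b \<Longrightarrow> \<exists>f. asg k b f" using match_asg[OF k1 assms(2)] .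
  have 2: "asg k b f \<Longrightarrow> (\<forall>s t. 1 \<le> s \<and> s \<le> t \<and> t \<le> k-1 \<longrightarrow> (t-s+2) choose 2 \<le> (\<Sum>j=s..t. b j))" for f
    by (rule asg_H)
  have 3: "(\<forall>s t. 1 \<le> s \<and> s \<le> t \<and> t \<le> k-1 \<longrightarrow> (t-s+2) choose 2 \<le> (\<Sum>j=s..t. b j)) \<Longrightarrow> matching_sequence k b"
    using H_match[OF k1 assms(2)] .
  show ?thesis using pm c 1 2 3 by blast
qed

end
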